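(* Let $(A,B)$ be a Katsura pair with $B\in M_N(\{0,1\})$ such that the KEP-action $(G_B,E_A)$ is regular. Suppose $v=(v_k)\in E_C^{-\infty}$ satisfies $B_{v_{k-1},v_k}=1$ for all $k<0$. Then for $\mu,\nu\in X_v$, $\mu\sim_{ae}\nu$ if and only if $C_v(\iota_v(\mu))=C_v(\iota_v(\nu))$.
   Context: Katsura pair: $N\in\mathbb{N}$, $A\in M_N(\mathbb{N})$ (nonnegative integers), $B\in M_N(\mathbb{Z})$ with $A_{ij}=0\Rightarrow B_{ij}=0$. Graph $E_A$: vertices $\{1,\dots,N\}$, edges $e_{i,j,m}$ ($0\le m<A_{ij}$), $r=i$, $s=j$; $E_A^{-\infty}$ left-infinite paths $\cdots\mu_{-2}\mu_{-1}$ with $s(\mu_k)=r(\mu_{k+1})$. The group bundle $\mathbb{Z}\times E_A^0$ (elements $a_i^k$) acts by $a_i^k\cdot e_{i,j,m}=e_{i,j,\hat m}$, $a_i^k|_{e_{i,j,m}}=a_j^{\hat k}$ where $kB_{ij}+m=\hat kA_{ij}+\hat m$, $0\le\hat m<A_{ij}$, extended recursively to finite paths; $G_B$ is the faithful quotient and $(G_B,E_A)$ the KEP-action. Regular: for every $g\in G_B$ there is $K$ such that $g\cdot\mu=\mu$, $|\mu|\ge K$ imply $g|_\mu$ is the unit at $s(\mu)$. $\mu\sim_{ae}\nu$ iff there are a finite $F\subseteq G_B$ and $(g_n)_{n<0}\subseteq F$ with $d(g_n)=r(\mu_n)$ and $g_n\cdot\mu_n\cdots\mu_{-1}=\nu_n\cdots\nu_{-1}$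 for all $n<0$. $C$ is the connectivity matrix of $E_A$ ($C_{ij}=1$ if $A_{ij}>0$, else $0$) with graph $E_C$; an element $v\in E_C^{-\infty}$ is encoded by its vertex sequence $(v_k)_{k\le-1}$, $v_k$ the source of the $k$-th edge and $v_{k-1}$ its range. $A_{v[k,-1]}=\prod_{j=k}^{-1}A_{v_{j-1},v_j}$. $X_v=\{\mu\in E_A^{-\infty}: s(\mu_k)=v_k\ \forall k<0\}$, $\mathcal{A}_v=\prod_{k<0}\{0,\dots,A_{v_{k-1},v_k}-1\}$, and $\iota_v:X_v\to\mathcal{A}_v$ sends $\cdots e_{v_{-3},v_{-2},i_{-2}}e_{v_{-2},v_{-1},i_{-1}}$ to $(\dots,i_{-2},i_{-1})$. $C_v:\mathcal{A}_v\to\mathbb{R}/\mathbb{Z}$ is $C_v(\dots,i_{-2},i_{-1})=\sum_{k=-1}^{-\infty}\frac{i_k}{A_{v[k,-1]}}\bmod 1$. *)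

theory Defs
  imports Complex_Main
begin

text \<open>Vertices are 1..N.  An edge e_{i,j,m} is the triple (i,j,m), with range i, source j.\<close>

type_synonym edge = "nat \<times> nat \<times> nat"

definition edge_r :: "edge \<Rightarrow> nat" where "edge_r e = fst e"
definition edge_s :: "edge \<Rightarrow> nat" where "edge_s e = fst (snd e)"
definition edge_lab :: "edge \<Rightarrow> nat" where "edge_lab e = snd (snd e)"

definition edge_in :: "nat \<Rightarrow> (nat \<Rightarrow> nat \<Rightarrow> nat) \<Rightarrow> edge \<Rightarrow> bool" where
  "edge_in N A e \<longleftrightarrow> edge_r e \<in> {1..N} \<and> edge_s e \<in> {1..N} \<and> edge_lab e < A (edge_r e) (edge_s e)"

definition katsura_pair :: "nat \<Rightarrow> (nat \<Rightarrow> nat \<Rightarrow> nat) \<Rightarrow> (nat \<Rightarrow> nat \<Rightarrow> int) \<Rightarrow> bool" where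
  "katsura_pair N A B \<longleftrightarrow> (\<forall>i\<in>{1..N}. \<forall>j\<in>{1..N}. A i j = 0 \<longrightarrow> B i j = 0)"

text \<open>a_i^k . e_{i,j,m} = e_{i,j,mhat}, a_i^k|_e = a_j^{khat}, where k B_ij + m = khat A_ij + mhat.
  The output is the pair (new edge, khat).\<close>
definition act_edge :: "(nat \<Rightarrow> nat \<Rightarrow> nat) \<Rightarrow> (nat \<Rightarrow> nat \<Rightarrow> int) \<Rightarrow> int \<Rightarrow> edge \<Rightarrow> edge \<times> int" where
  "act_edge A B k e =
     (let i = edge_r e; j = edge_s e; t = k * B i j + int (edge_lab e)
      in ((i, j, nat (t mod int (A i j))), t div int (A i j)))"

text \<open>The vertex of the group element
  is implicit (it is d(g) = r(first edge)); only the integer k is tracked.\<close>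
fun act_path :: "(nat \<Rightarrow> nat \<Rightarrow> nat) \<Rightarrow> (nat \<Rightarrow> nat \<Rightarrow> int) \<Rightarrow> int \<Rightarrow> edge list \<Rightarrow> edge list" where
  "act_path A B k [] = []"
| "act_path A B k (e # mu) = fst (act_edge A B k e) # act_path A B (snd (act_edge A B k e)) mu"

fun res_path :: "(nat \<Rightarrow> nat \<Rightarrow> nat) \<Rightarrow> (nat \<Rightarrow> nat \<Rightarrow> int) \<Rightarrow> int \<Rightarrow> edge list \<Rightarrow> int" where
  "res_path A B k [] = k"
| "res_path A B k (e # mu) = res_path A B (snd (act_edge A B k e)) mu"

definition fin_path :: "nat \<Rightarrow> (nat \<Rightarrow> nat \<Rightarrow> nat) \<Rightarrow> edge list \<Rightarrow> bool" where
  "fin_path N A mu \<longleftrightarrow> (\<forall>e\<in>set mu. edge_in N A e) \<and> successively (\<lambda>e f. edge_s e = edge_r f) mu"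

text \<open>Elements of the bundle Z x E^0 are pairs (k,i) = a_i^k.  G_B is the faithful quotient:
  a_i^k and a_i^l are identified iff they act identically on all finite paths with range i.\<close>
definition GB_carrier :: "nat \<Rightarrow> (int \<times> nat) set" where
  "GB_carrier N = {(k, i). i \<in> {1..N}}"

definition GB_equiv :: "nat \<Rightarrow> (nat \<Rightarrow> nat \<Rightarrow> nat) \<Rightarrow> (nat \<Rightarrow> nat \<Rightarrow> int) \<Rightarrow> int \<times> nat \<Rightarrow> int \<times> nat \<Rightarrow> bool" where
  "GB_equiv N A B g h \<longleftrightarrow> snd g = snd h \<and> snd g \<in> {1..N} \<and>
     (\<forall>mu. fin_path N A mu \<and> mu \<noteq> [] \<and> edge_r (hd mu) = snd g \<longrightarrow>
            act_path A B (fst g) mu = act_path A B (fst h) mu)"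

definition regular :: "nat \<Rightarrow> (nat \<Rightarrow> nat \<Rightarrow> nat) \<Rightarrow> (nat \<Rightarrow> nat \<Rightarrow> int) \<Rightarrow> bool" where
  "regular N A B \<longleftrightarrow> (\<forall>g\<in>GB_carrier N. \<exists>K::nat. \<forall>mu.
      fin_path N A mu \<and> mu \<noteq> [] \<and> edge_r (hd mu) = snd g \<and> length mu \<ge> K \<and>
      act_path A B (fst g) mu = mu \<longrightarrow>
      GB_equiv N A B (res_path A B (fst g) mu, edge_s (last mu)) (0, edge_s (last mu)))"

text \<open>Left-infinite paths ... mu_{-2} mu_{-1}, indexed by negative integers (values at
  nonnegative indices are irrelevant).\<close>
definition left_inf_path :: "nat \<Rightarrow> (nat \<Rightarrow> nat \<Rightarrow> nat) \<Rightarrow> (int \<Rightarrow> edge) \<Rightarrow> bool" where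
  "left_inf_path N A mu \<longleftrightarrow> (\<forall>k<0. edge_in N A (mu k)) \<and>
      (\<forall>k < -1. edge_s (mu k) = edge_r (mu (k + 1)))"

definition conn :: "(nat \<Rightarrow> nat \<Rightarrow> nat) \<Rightarrow> nat \<Rightarrow> nat \<Rightarrow> nat" where
  "conn A i j = (if A i j > 0 then 1 else 0)"

text \<open>An element of E_C^{-infty}, encoded by its vertex sequence (v_k)_{k \<le> -1}:
  the k-th edge has source v_k and range v_{k-1}.\<close>
definition EC_path :: "nat \<Rightarrow> (nat \<Rightarrow> nat \<Rightarrow> nat) \<Rightarrow> (int \<Rightarrow> nat) \<Rightarrow> bool" where
  "EC_path N A v \<longleftrightarrow> (\<forall>k<0. v k \<in> {1..N} \<and> v (k - 1) \<in> {1..N} \<and> conn A (v (k - 1)) (v k) = 1)"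

definition X_v :: "nat \<Rightarrow> (nat \<Rightarrow> nat \<Rightarrow> nat) \<Rightarrow> (int \<Rightarrow> nat) \<Rightarrow> (int \<Rightarrow> edge) set" where
  "X_v N A v = {mu. left_inf_path N A mu \<and> (\<forall>k<0. edge_s (mu k) = v k)}"

definition iota :: "(int \<Rightarrow> edge) \<Rightarrow> (int \<Rightarrow> nat)" where
  "iota mu = (\<lambda>k. edge_lab (mu k))"

definition Aprod :: "(nat \<Rightarrow> nat \<Rightarrow> nat) \<Rightarrow> (int \<Rightarrow> nat) \<Rightarrow> int \<Rightarrow> nat" where
  "Aprod A v k = (\<Prod>j\<in>{k..-1}. A (v (j - 1)) (v j))"

text \<open>C_v(..., i_{-2}, i_{-1}) = sum_{k=-1}^{-infty} i_k / A_{v[k,-1]} mod 1, represented by its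
  fractional part (the canonical representative in [0,1) of R/Z).  Summation index n
  corresponds to k = -(n+1).\<close>
definition C_v :: "(nat \<Rightarrow> nat \<Rightarrow> nat) \<Rightarrow> (int \<Rightarrow> nat) \<Rightarrow> (int \<Rightarrow> nat) \<Rightarrow> real" where
  "C_v A v a = frac (\<Sum>n. real (a (- int n - 1)) / real (Aprod A v (- int n - 1)))"

text \<open>Asymptotic equivalence: a finite F \<subseteq> G_B (given by representatives) and g_n \<in> F, n<0,
  with d(g_n) = r(mu_n) and g_n . mu_n ... mu_{-1} = nu_n ... nu_{-1}.\<close>
definition ae_equiv :: "nat \<Rightarrow> (nat \<Rightarrow> nat \<Rightarrow> nat) \<Rightarrow> (nat \<Rightarrow> nat \<Rightarrow> int) \<Rightarrow> (int \<Rightarrow> edge) \<Rightarrow> (int \<Rightarrow> edge) \<Rightarrow> bool" where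
  "ae_equiv N A B mu nu \<longleftrightarrow> (\<exists>F g. finite F \<and> F \<subseteq> GB_carrier N \<and>
      (\<forall>n<0. g n \<in> F \<and> snd (g n) = edge_r (mu n) \<and>
             act_path A B (fst (g n)) (map mu [n..-1]) = map nu [n..-1]))"

end

theory Submission
  imports Defs "HOL-Library.Infinite_Set"
begin


definition good :: "(nat \<Rightarrow> nat \<Rightarrow> nat) \<Rightarrow> (nat \<Rightarrow> nat \<Rightarrow> int) \<Rightarrow> edge \<Rightarrow> bool" where
  "good A B e \<longleftrightarrow> edge_lab e < A (edge_r e) (edge_s e) \<and> B (edge_r e) (edge_s e) = 1"

fun lval :: "(nat \<Rightarrow> nat \<Rightarrow> nat) \<Rightarrow> edge list \<Rightarrow> int" where
  "lval A [] = 0"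
| "lval A (e # es) = int (edge_lab e) + int (A (edge_r e) (edge_s e)) * lval A es"

fun lW :: "(nat \<Rightarrow> nat \<Rightarrow> nat) \<Rightarrow> edge list \<Rightarrow> int" where
  "lW A [] = 1"
| "lW A (e # es) = int (A (edge_r e) (edge_s e)) * lW A es"

lemma edge_eq: "e = (edge_r e, edge_s e, edge_lab e)"
  by (simp add: edge_r_def edge_s_def edge_lab_def)

lemma lW_pos: "\<forall>e\<in>set es. good A B e \<Longrightarrow> lW A es > 0"
  by (induction es) (auto simp: good_def)

lemma lval_bounds: "\<forall>e\<in>set es. good A B e \<Longrightarrow> 0 \<le> lval A es \<and> lval A es < lW A es"
proof (induction es)
  case Nil then show ?case by simp
next
  case (Cons e es)
  define a where "a = int (A (edge_r e) (edge_s e))"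
  define m where "m = int (edge_lab e)"
  have m: "0 \<le> m" "m < a" using Cons.prems by (auto simp: good_def a_def m_def)
  have ih: "0 \<le> lval A es" "lval A es + 1 \<le> lW A es" using Cons by auto
  have "a * (lval A es + 1) \<le> a * lW A es" using ih m by (intro mult_left_mono) auto
  then show ?case using m ih by (simp add: a_def[symmetric] m_def[symmetric] algebra_simps)
qed

lemma factor_le_lW: "\<forall>e\<in>set es. good A B e \<Longrightarrow> e \<in> set es \<Longrightarrow> int (A (edge_r e) (edge_s e)) \<le> lW A es"
proof (induction es)
  case Nil then show ?case by simp
next
  case (Cons f es)
  have p: "lW A es \<ge> 1" using lW_pos[of es A B] Cons.prems by auto
  have a: "int (A (edge_r f) (edge_s f)) \<ge> 1" using Cons.prems by (auto simp: good_def)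
  show ?case
  proof (cases "e = f")
    case True
    then show ?thesis using p a by simp
  next
    case False
    then have "int (A (edge_r e) (edge_s e)) \<le> lW A es" using Cons by auto
    also have "\<dots> \<le> int (A (edge_r f) (edge_s f)) * lW A es" using a p by simp
    finally show ?thesis by simp
  qed
qed

lemma act_val:
  assumes "\<forall>e\<in>set es. good A B e"
  shows "map edge_r (act_path A B k es) = map edge_r es \<and> map edge_s (act_path A B k es) = map edge_s es
    \<and> (\<forall>e\<in>set (act_path A B k es). good A B e)
    \<and> lval A (act_path A B k es) = (k + lval A es) mod lW A es"
  using assms
proof (induction es arbitrary: k)
  case Nil then show ?case by simp
next
  case (Cons e es)
  define a where "a = int (A (edge_r e) (edge_s e))"
  define m where "m = int (edge_lab e)"
  have g: "good A B e" using Cons.prems by auto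
  have B1: "B (edge_r e) (edge_s e) = 1" using g by (simp add: good_def)
  have apos: "a > 0" using g by (simp add: good_def a_def)
  define t where "t = k + m"
  have ae: "act_edge A B k e = ((edge_r e, edge_s e, nat (t mod a)), t div a)"
    by (simp add: act_edge_def Let_def B1 t_def a_def m_def)
  have ih: "map edge_r (act_path A B (t div a) es) = map edge_r es \<and> map edge_s (act_path A B (t div a) es) = map edge_s es
    \<and> (\<forall>e\<in>set (act_path A B (t div a) es). good A B e)
    \<and> lval A (act_path A B (t div a) es) = (t div a + lval A es) mod lW A es"
    using Cons by auto
  have tm: "0 \<le> t mod a" "t mod a < a" using apos by auto
  have ge: "good A B (edge_r e, edge_s e, nat (t mod a))"
    using tm B1 by (simp add: good_def edge_r_def edge_s_def edge_lab_def a_def)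
  have Wp: "lW A es > 0" using lW_pos[of es A B] Cons.prems by auto
  have key: "(t + a * lval A es) mod (a * lW A es) = a * ((t div a + lval A es) mod lW A es) + t mod a"
  proof -
    have "(t + a * lval A es) mod (a * lW A es) = a * ((t + a * lval A es) div a mod lW A es) + (t + a * lval A es) mod a"
      using mod_mult2_eq'[of "t + a * lval A es" "nat a" "nat (lW A es)"] apos Wp by simp
    also have "(t + a * lval A es) div a = t div a + lval A es" using apos by simp
    also have "(t + a * lval A es) mod a = t mod a" by simp
    finally show ?thesis .
  qed
  have e1: "edge_r (edge_r e, edge_s e, x) = edge_r e" "edge_s (edge_r e, edge_s e, x) = edge_s e"
     "edge_lab (edge_r e, edge_s e, x) = x" for x
    by (simp_all add: edge_r_def edge_s_def edge_lab_def)
  have "lval A (act_path A B k (e # es)) = (t mod a) + a * ((t div a + lval A es) mod lW A es)"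
    using ih tm by (simp add: ae e1 a_def[symmetric])
  also have "\<dots> = (t + a * lval A es) mod (a * lW A es)" using key by simp
  also have "\<dots> = (k + lval A (e # es)) mod lW A (e # es)"
    by (simp add: t_def a_def[symmetric] m_def[symmetric] algebra_simps)
  finally show ?case
    using ih ge by (simp add: ae e1)
qed

lemma lval_inj:
  assumes "\<forall>e\<in>set es. good A B e" "\<forall>e\<in>set fs. good A B e"
    "map edge_r es = map edge_r fs" "map edge_s es = map edge_s fs" "lval A es = lval A fs"
  shows "es = fs"
  using assms
proof (induction es arbitrary: fs)
  case Nil then show ?case by simp
next
  case (Cons e es)
  then obtain f fs' where fs: "fs = f # fs'" by (cases fs) auto
  have rs: "edge_r e = edge_r f" "edge_s e = edge_s f" using Cons.prems fs by auto
  define a where "a = int (A (edge_r e) (edge_s e))"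
  have l: "int (edge_lab e) + a * lval A es = int (edge_lab f) + a * lval A fs'"
    using Cons.prems(5) fs rs by (simp add: a_def)
  have b: "int (edge_lab e) < a" "int (edge_lab f) < a" using Cons.prems fs rs by (auto simp: good_def a_def)
  have "(int (edge_lab e) + a * lval A es) mod a = (int (edge_lab f) + a * lval A fs') mod a" using l by simp
  then have lab: "edge_lab e = edge_lab f" using b by simp
  have apos: "a > 0" using b by simp
  have "lval A es = lval A fs'" using l lab apos by simp
  then have "es = fs'" using Cons fs by auto
  moreover have "e = f" using rs lab edge_eq[of e] edge_eq[of f] by simp
  ultimately show ?case using fs by simp
qed

lemma act0: "\<forall>e\<in>set es. good A B e \<Longrightarrow> act_path A B 0 es = es"
proof (induction es)
  case Nil then show ?case by simp
next
  case (Cons e es)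
  have g: "good A B e" using Cons.prems by auto
  then have "act_edge A B 0 e = (e, 0)"
    using edge_eq[of e] by (simp add: act_edge_def good_def Let_def edge_r_def edge_s_def edge_lab_def)
  then show ?case using Cons by simp
qed

lemma act1_ones: "\<forall>e\<in>set es. good A B e \<and> A (edge_r e) (edge_s e) = 1 \<Longrightarrow>
   act_path A B 1 es = es \<and> res_path A B 1 es = 1"
proof (induction es)
  case Nil then show ?case by simp
next
  case (Cons e es)
  have g: "good A B e" "A (edge_r e) (edge_s e) = 1" using Cons.prems by auto
  then have "edge_lab e = 0" by (simp add: good_def)
  then have "act_edge A B 1 e = (e, 1)"
    using g edge_eq[of e] by (simp add: act_edge_def good_def Let_def edge_r_def edge_s_def edge_lab_def)
  then show ?case using Cons by simp
qed



definition Qp :: "(nat \<Rightarrow> nat) \<Rightarrow> nat \<Rightarrow> real" where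
  "Qp a m = (\<Prod>i<m. real (a i))"

definition ff :: "(nat \<Rightarrow> nat) \<Rightarrow> (nat \<Rightarrow> nat) \<Rightarrow> nat \<Rightarrow> real" where
  "ff a d i = real (d i) / Qp a (Suc i)"

lemma Qp_Suc: "Qp a (Suc m) = real (a m) * Qp a m"
  by (simp add: Qp_def)

lemma Qp_pos: "(\<And>i. a i \<ge> 1) \<Longrightarrow> Qp a m > 0"
  unfolding Qp_def by (intro prod_pos) (auto simp: Suc_le_eq)

lemma ff_le:
  assumes "\<And>i. d i < a i"
  shows "ff a d i \<le> 1 / Qp a i - 1 / Qp a (Suc i)"
proof -
  have a1: "\<And>i. a i \<ge> 1" using assms by (metis less_one not_le not_less_zero less_le_trans)
  have q: "Qp a i > 0" using Qp_pos a1 by blast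
  have ai: "real (a i) \<ge> 1" using a1 by simp
  have di: "real (d i) \<le> real (a i) - 1" using assms[of i] by linarith
  have "ff a d i = real (d i) / (real (a i) * Qp a i)" by (simp add: ff_def Qp_Suc)
  also have "\<dots> \<le> (real (a i) - 1) / (real (a i) * Qp a i)"
    using di q ai by (intro divide_right_mono) auto
  also have "\<dots> = 1 / Qp a i - 1 / Qp a (Suc i)" using q ai by (simp add: Qp_Suc field_simps)
  finally show ?thesis .
qed

lemma ff_nonneg: "0 \<le> ff a d i"
  unfolding ff_def Qp_def by (simp add: prod_nonneg)

lemma tail_partial:
  assumes "\<And>i. d i < a i"
  shows "(\<Sum>i<M. ff a d (i + m)) \<le> 1 / Qp a m - 1 / Qp a (m + M)"
proof (induction M)
  case 0 then show ?case by simp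
next
  case (Suc M)
  have "(\<Sum>i<Suc M. ff a d (i + m)) = (\<Sum>i<M. ff a d (i + m)) + ff a d (M + m)" by simp
  also have "\<dots> \<le> (1 / Qp a m - 1 / Qp a (m + M)) + (1 / Qp a (M + m) - 1 / Qp a (Suc (M + m)))"
    using Suc ff_le[OF assms] by (intro add_mono) auto
  finally show ?case by (simp add: add.commute)
qed

lemma ff_summable:
  assumes "\<And>i. d i < a i"
  shows "summable (ff a d)"
proof -
  have a1: "\<And>i. a i \<ge> 1" using assms by (metis less_one not_le not_less_zero less_le_trans)
  have "(\<Sum>k\<le>n. ff a d k) \<le> 1" for n
  proof -
    have "(\<Sum>k\<le>n. ff a d k) = (\<Sum>k<Suc n. ff a d (k + 0))" by (simp add: lessThan_Suc_atMost)
    also have "\<dots> \<le> 1 / Qp a 0 - 1 / Qp a (0 + Suc n)" by (rule tail_partial[OF assms])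
    also have "\<dots> \<le> 1" using Qp_pos[of a "Suc n", OF a1] by (simp add: Qp_def)
    finally show ?thesis .
  qed
  then show ?thesis by (intro bounded_imp_summable[of _ 1]) (auto simp: ff_nonneg)
qed

lemma tail_bounds:
  assumes "\<And>i. d i < a i"
  shows "suminf (ff a d) = (\<Sum>i<m. ff a d i) + (\<Sum>i. ff a d (i + m))"
    and "0 \<le> (\<Sum>i. ff a d (i + m))" and "(\<Sum>i. ff a d (i + m)) \<le> 1 / Qp a m"
proof -
  have a1: "\<And>i. a i \<ge> 1" using assms by (metis less_one not_le not_less_zero less_le_trans)
  have s: "summable (ff a d)" by (rule ff_summable[OF assms])
  then show "suminf (ff a d) = (\<Sum>i<m. ff a d i) + (\<Sum>i. ff a d (i + m))"
    using suminf_split_initial_segment[OF s, of m] by simp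
  have s2: "summable (\<lambda>i. ff a d (i + m))" using s by (rule summable_ignore_initial_segment)
  show "0 \<le> (\<Sum>i. ff a d (i + m))" using s2 by (intro suminf_nonneg) (auto simp: ff_nonneg)
  show "(\<Sum>i. ff a d (i + m)) \<le> 1 / Qp a m"
  proof (rule suminf_le_const[OF s2])
    fix M
    have "(\<Sum>i<M. ff a d (i + m)) \<le> 1 / Qp a m - 1 / Qp a (m + M)" by (rule tail_partial[OF assms])
    also have "\<dots> \<le> 1 / Qp a m" using Qp_pos[of a "m + M", OF a1] by simp
    finally show "(\<Sum>i<M. ff a d (i + m)) \<le> 1 / Qp a m" .
  qed
qed

lemma frac_zero_approx:
  fixes x :: real
  assumes "\<And>e. e > 0 \<Longrightarrow> \<exists>z::int. \<bar>x - of_int z\<bar> \<le> e"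
  shows "x = of_int \<lfloor>x\<rfloor>"
proof (rule ccontr)
  assume ne: "x \<noteq> of_int \<lfloor>x\<rfloor>"
  define e where "e = min (frac x) (1 - frac x) / 2"
  have fx: "0 < frac x" "frac x < 1" using ne frac_lt_1[of x] frac_ge_0[of x] of_int_floor_le[of x]
    by (auto simp: frac_def order.order_iff_strict)
  have ep: "e > 0" using fx by (simp add: e_def)
  obtain z :: int where z: "\<bar>x - of_int z\<bar> \<le> e" using assms[OF ep] by blast
  show False
  proof (cases "z \<le> \<lfloor>x\<rfloor>")
    case True
    then have "x - of_int z \<ge> frac x" by (simp add: frac_def)
    then show False using z fx by (simp add: e_def)
  next
    case False
    then have "of_int z \<ge> of_int \<lfloor>x\<rfloor> + (1::real)" by linarith
    then have "of_int z - x \<ge> 1 - frac x" by (simp add: frac_def)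
    then show False using z fx by (simp add: e_def)
  qed
qed

lemma back_num:
  assumes d1: "\<And>i. d1 i < a i" and d2: "\<And>i. d2 i < a i"
    and Qi: "\<And>m. real_of_int (Qi m) = Qp a m"
    and V1: "\<And>m. real_of_int (V1 m) / Qp a m = (\<Sum>i<m. ff a d1 i)"
    and V2: "\<And>m. real_of_int (V2 m) / Qp a m = (\<Sum>i<m. ff a d2 i)"
    and fr: "frac (suminf (ff a d1)) = frac (suminf (ff a d2))"
  shows "\<exists>z::int. \<forall>m. \<bar>V2 m - V1 m - z * Qi m\<bar> \<le> 1"
proof -
  have a1: "\<And>i. a i \<ge> 1" using d1 by (metis less_one not_le not_less_zero less_le_trans)
  define S1 where "S1 = suminf (ff a d1)"
  define S2 where "S2 = suminf (ff a d2)"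
  define z where "z = \<lfloor>S2\<rfloor> - \<lfloor>S1\<rfloor>"
  have Sz: "S2 - S1 = of_int z" using fr unfolding S1_def[symmetric] S2_def[symmetric] z_def frac_def by simp
  show ?thesis
  proof (intro exI allI)
    fix m
    define T1 where "T1 = (\<Sum>i. ff a d1 (i + m))"
    define T2 where "T2 = (\<Sum>i. ff a d2 (i + m))"
    have q: "Qp a m > 0" using Qp_pos[of a m, OF a1] .
    have e1: "S1 = real_of_int (V1 m) / Qp a m + T1" using tail_bounds(1)[OF d1, where m=m] V1 by (simp add: S1_def T1_def)
    have e2: "S2 = real_of_int (V2 m) / Qp a m + T2" using tail_bounds(1)[OF d2, where m=m] V2 by (simp add: S2_def T2_def)
    have b1: "0 \<le> T1" "T1 \<le> 1 / Qp a m" using tail_bounds(2,3)[OF d1, where m=m] by (simp_all add: T1_def)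
    have b2: "0 \<le> T2" "T2 \<le> 1 / Qp a m" using tail_bounds(2,3)[OF d2, where m=m] by (simp_all add: T2_def)
    have "real_of_int (V2 m - V1 m - z * Qi m) = (S2 - T2 - (S1 - T1) - of_int z) * Qp a m"
      using e1 e2 q Qi[of m] by (simp add: field_simps)
    also have "\<dots> = (T1 - T2) * Qp a m" using Sz by simp
    finally have eq: "real_of_int (V2 m - V1 m - z * Qi m) = (T1 - T2) * Qp a m" .
    have "\<bar>T1 - T2\<bar> \<le> 1 / Qp a m" using b1 b2 by linarith
    then have "\<bar>T1 - T2\<bar> * Qp a m \<le> 1" using q by (simp add: field_simps)
    then have "\<bar>(T1 - T2) * Qp a m\<bar> \<le> 1" using q by (simp add: abs_mult)
    then have "\<bar>real_of_int (V2 m - V1 m - z * Qi m)\<bar> \<le> 1" using eq by simp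
    then show "\<bar>V2 m - V1 m - z * Qi m\<bar> \<le> 1" by linarith
  qed
qed

lemma fwd_num:
  assumes d1: "\<And>i. d1 i < a i" and d2: "\<And>i. d2 i < a i"
    and Qi: "\<And>m. real_of_int (Qi m) = Qp a m"
    and V1: "\<And>m. real_of_int (V1 m) / Qp a m = (\<Sum>i<m. ff a d1 i)"
    and V2: "\<And>m. real_of_int (V2 m) / Qp a m = (\<Sum>i<m. ff a d2 i)"
    and unb: "\<And>b. \<exists>m. Qp a m > b"
    and K: "\<And>m. m \<ge> 1 \<Longrightarrow> \<exists>k z::int. \<bar>k\<bar> \<le> K \<and> V2 m = k + V1 m + z * Qi m"
  shows "frac (suminf (ff a d1)) = frac (suminf (ff a d2))"
proof -
  have a1: "\<And>i. a i \<ge> 1" using d1 by (metis less_one not_le not_less_zero less_le_trans)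
  define S1 where "S1 = suminf (ff a d1)"
  define S2 where "S2 = suminf (ff a d2)"
  have approx: "\<exists>z::int. \<bar>(S2 - S1) - of_int z\<bar> \<le> e" if ep: "e > 0" for e
  proof -
    obtain m where m: "Qp a m > max 1 ((real_of_int K + 1) / e)" using unb by blast
    have "m \<noteq> 0" proof assume "m = 0" then show False using m by (simp add: Qp_def) qed
    then obtain k z where kz: "\<bar>k\<bar> \<le> K" "V2 m = k + V1 m + z * Qi m" using K[of m] by auto
    define T1 where "T1 = (\<Sum>i. ff a d1 (i + m))"
    define T2 where "T2 = (\<Sum>i. ff a d2 (i + m))"
    have q: "Qp a m > 0" using Qp_pos[of a m, OF a1] .
    have e1: "S1 = real_of_int (V1 m) / Qp a m + T1" using tail_bounds(1)[OF d1, where m=m] V1 by (simp add: S1_def T1_def)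
    have e2: "S2 = real_of_int (V2 m) / Qp a m + T2" using tail_bounds(1)[OF d2, where m=m] V2 by (simp add: S2_def T2_def)
    have b1: "0 \<le> T1" "T1 \<le> 1 / Qp a m" using tail_bounds(2,3)[OF d1, where m=m] by (simp_all add: T1_def)
    have b2: "0 \<le> T2" "T2 \<le> 1 / Qp a m" using tail_bounds(2,3)[OF d2, where m=m] by (simp_all add: T2_def)
    have "(S2 - S1) - of_int z = real_of_int k / Qp a m + (T2 - T1)"
      using e1 e2 q Qi[of m] kz(2) by (simp add: field_simps)
    moreover have "\<bar>real_of_int k / Qp a m\<bar> = \<bar>real_of_int k\<bar> / Qp a m" using q by simp
    moreover have "\<bar>T2 - T1\<bar> \<le> 1 / Qp a m" using b1 b2 by linarith
    ultimately have "\<bar>(S2 - S1) - of_int z\<bar> \<le> \<bar>real_of_int k\<bar> / Qp a m + 1 / Qp a m"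
      by (metis abs_triangle_ineq add_mono order_trans order.refl)
    also have "\<dots> = (\<bar>real_of_int k\<bar> + 1) / Qp a m" by (simp add: add_divide_distrib)
    also have "\<dots> \<le> (real_of_int K + 1) / Qp a m" using kz(1) q by (intro divide_right_mono) auto
    also have "\<dots> \<le> e"
    proof -
      have "(real_of_int K + 1) / e < Qp a m" using m by simp
      then have "real_of_int K + 1 < Qp a m * e" using ep by (simp add: field_simps)
      then show ?thesis using q by (simp add: field_simps)
    qed
    finally show ?thesis by blast
  qed
  have "S2 - S1 = of_int \<lfloor>S2 - S1\<rfloor>" by (rule frac_zero_approx) (use approx in blast)
  then have "S2 = S1 + of_int \<lfloor>S2 - S1\<rfloor>" by linarith
  then have "frac S2 = frac S1" by (metis frac_add_of_int_right)
  then show ?thesis by (simp add: S1_def S2_def)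
qed



lemma succ_upt: "(\<And>i. R i (Suc i)) \<Longrightarrow> successively R [lo..<hi]"
proof (induction hi)
  case 0 then show ?case by simp
next
  case (Suc hi)
  show ?case
  proof (cases "lo \<le> hi")
    case True
    have "lo < hi \<Longrightarrow> last [lo..<hi] = hi - 1" by (cases hi) auto
    then have "lo < hi \<Longrightarrow> R (last [lo..<hi]) hi" using Suc.prems[of "hi - 1"] by (cases hi) auto
    moreover have "lo < hi \<longleftrightarrow> [lo..<hi] \<noteq> []" by auto
    ultimately show ?thesis using True Suc by (auto simp: successively_append_iff simp del: upt_eq_Nil_conv)
  next
    case False then show ?thesis by simp
  qed
qed

lemma fin_path_seg:
  assumes "\<And>i. edge_in N A (E i)" "\<And>i. edge_s (E (Suc i)) = edge_r (E i)"
  shows "fin_path N A (map E (rev [lo..<hi]))"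
  unfolding fin_path_def
  using assms by (auto simp: rev_map[symmetric] successively_map intro!: succ_upt)

lemma map_upto: "map x [-int m..-1] = map (\<lambda>i. x (-int i - 1)) (rev [0..<m])"
proof (induction m)
  case 0 then show ?case by simp
next
  case (Suc m)
  have e: "[-int (Suc m)..-1] = (-int m - 1) # [-int m..-1]"
    using upto_rec1[of "-int (Suc m)" "-1"] by simp
  show ?case unfolding e using Suc by simp
qed

lemma Aprod_eq: "Aprod A v (-int m) = (\<Prod>i<m. A (v (-int (Suc i) - 1)) (v (-int i - 1)))"
proof (induction m)
  case 0 then show ?case by (simp add: Aprod_def)
next
  case (Suc m)
  have s: "{-int (Suc m)..-1} = insert (-int (Suc m)) {-int m..-1}" by auto
  have "Aprod A v (-int (Suc m)) = A (v (-int (Suc m) - 1)) (v (-int (Suc m))) * Aprod A v (-int m)"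
    unfolding Aprod_def s by (subst prod.insert) auto
  moreover have "-int (Suc m) = -int m - 1" by simp
  ultimately show ?case using Suc by (simp only: prod.lessThan_Suc) (simp add: mult.commute)
qed

lemma seg_lW:
  assumes "\<And>i. edge_r (E i) = u (Suc i)" "\<And>i. edge_s (E i) = u i"
  shows "lW A (map E (rev [0..<m])) = int (\<Prod>i<m. A (u (Suc i)) (u i))"
  by (induction m) (auto simp: assms)

lemma seg_lval:
  assumes "\<And>i. edge_r (E i) = u (Suc i)" "\<And>i. edge_s (E i) = u i"
    and a1: "\<And>i. A (u (Suc i)) (u i) \<ge> 1"
  shows "real_of_int (lval A (map E (rev [0..<m]))) / Qp (\<lambda>i. A (u (Suc i)) (u i)) m
     = (\<Sum>i<m. ff (\<lambda>i. A (u (Suc i)) (u i)) (\<lambda>i. edge_lab (E i)) i)"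
proof (induction m)
  case 0 then show ?case by (simp add: Qp_def)
next
  case (Suc m)
  define a where "a = (\<lambda>i. A (u (Suc i)) (u i))"
  have q: "Qp a m > 0" using Qp_pos[of a m] a1 by (simp add: a_def)
  have am: "real (a m) \<ge> 1" using a1 by (simp add: a_def)
  have lv: "lval A (map E (rev [0..<Suc m])) = int (edge_lab (E m)) + int (a m) * lval A (map E (rev [0..<m]))"
    by (simp add: assms a_def)
  have "real_of_int (lval A (map E (rev [0..<Suc m]))) / Qp a (Suc m)
     = real (edge_lab (E m)) / Qp a (Suc m) + real_of_int (lval A (map E (rev [0..<m]))) / Qp a m"
    unfolding lv Qp_Suc using q am by (simp add: field_simps)
  then show ?case using Suc by (simp add: a_def[symmetric] ff_def)
qed



lemma Qp_mono: assumes "\<And>i. a i \<ge> 1" "m \<le> n" shows "Qp a m \<le> Qp a n"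
  using assms(2)
proof (induction n rule: dec_induct)
  case base then show ?case by simp
next
  case (step n)
  have "Qp a n \<le> real (a n) * Qp a n" using Qp_pos[of a n, OF assms(1)] assms(1)[of n] by (simp add: mult_le_cancel_right1)
  then show ?case using step by (simp add: Qp_Suc)
qed

lemma rev_upt_hd: "lo < hi \<Longrightarrow> rev [lo..<hi] = (hi - 1) # rev [lo..<hi - 1]"
  by (cases hi) auto

lemma rev_upt_last: "lo < hi \<Longrightarrow> last (rev [lo..<hi]) = lo"
  by (simp add: last_rev hd_upt)

lemma reg_dich:
  assumes reg: "regular N A B"
   and E: "\<And>i. edge_in N A (E i)" "\<And>i. edge_s (E i) = u i" "\<And>i. edge_r (E i) = u (Suc i)" "\<And>i. good A B (E i)"
  shows "(\<forall>i. A (u (Suc i)) (u i) = 1) \<or> (\<forall>b. \<exists>m. Qp (\<lambda>i. A (u (Suc i)) (u i)) m > b)"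
proof -
  define a where "a = (\<lambda>i. A (u (Suc i)) (u i))"
  have a1: "a i \<ge> 1" for i
  proof -
    have "edge_lab (E i) < a i" using E(4)[of i] E(2)[of i] E(3)[of i] by (simp add: good_def a_def)
    then show ?thesis by linarith
  qed
  have uN: "u i \<in> {1..N}" for i using E(1)[of i] E(2)[of i] by (simp add: edge_in_def)
  have Esucc: "\<And>i. edge_s (E (Suc i)) = edge_r (E i)" using E(2,3) by simp
  have allgood: "\<forall>e\<in>set (map E xs). good A B e" for xs using E(4) by auto
  have claim: "\<exists>i1>i0. a i1 \<ge> 2" if i0: "a i0 \<ge> 2" for i0
  proof (rule ccontr)
    assume "\<not> (\<exists>i1>i0. a i1 \<ge> 2)"
    then have ones: "a i = 1" if "i > i0" for i
    proof -
      have "\<not> a i \<ge> 2" using that \<open>\<not> (\<exists>i1>i0. a i1 \<ge> 2)\<close> by blast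
      then show ?thesis using a1[of i] by linarith
    qed
    have inf: "\<not> finite {i. i > i0}"
      unfolding infinite_nat_iff_unbounded_le
    proof
      fix m show "\<exists>n\<ge>m. n \<in> {i. i > i0}" by (intro exI[of _ "max m (Suc i0)"]) auto
    qed
    have fin: "finite (u ` {i. i > i0})" by (rule finite_subset[of _ "{1..N}"]) (use uN in auto)
    obtain a0 where a0: "a0 \<in> {i. i > i0}" and infa0: "\<not> finite {i \<in> {i. i > i0}. u i = u a0}"
      using pigeonhole_infinite[OF inf fin] by blast
    define w where "w = u a0"
    have gc: "(1, w) \<in> GB_carrier N" using uN by (simp add: GB_carrier_def w_def)
    obtain K where K: "\<And>p. fin_path N A p \<and> p \<noteq> [] \<and> edge_r (hd p) = w \<and> length p \<ge> K \<and>
      act_path A B 1 p = p \<Longrightarrow>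
      GB_equiv N A B (res_path A B 1 p, edge_s (last p)) (0, edge_s (last p))"
      using reg gc unfolding regular_def by fastforce
    obtain b where b: "b \<ge> a0 + K + 1" "b \<in> {i \<in> {i. i > i0}. u i = u a0}"
      using infa0 unfolding infinite_nat_iff_unbounded_le by blast
    define p1 where "p1 = map E (rev [a0..<b])"
    have ab: "a0 < b" using b by simp
    have p1ne: "p1 \<noteq> []" using ab by (simp add: p1_def)
    have p1hd: "edge_r (hd p1) = w" using ab b E(3) by (simp add: p1_def rev_upt_hd w_def)
    have p1last: "edge_s (last p1) = w" using ab E(2) by (simp add: p1_def last_map rev_upt_last w_def)
    have p1len: "length p1 \<ge> K" using b by (simp add: p1_def)
    have p1fin: "fin_path N A p1" unfolding p1_def by (rule fin_path_seg[of N A E]) (use E(1) Esucc in auto)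
    have p1ones: "\<forall>e\<in>set p1. good A B e \<and> A (edge_r e) (edge_s e) = 1"
      using E a0 ones by (auto simp: p1_def a_def)
    have "act_path A B 1 p1 = p1 \<and> res_path A B 1 p1 = 1" by (rule act1_ones[OF p1ones])
    then have geq: "GB_equiv N A B (1, w) (0, w)"
      using K[of p1] p1ne p1hd p1last p1len p1fin by simp
    define p2 where "p2 = map E (rev [i0..<a0])"
    have ia: "i0 < a0" using a0 by simp
    have p2ne: "p2 \<noteq> []" using ia by (simp add: p2_def)
    have p2hd: "edge_r (hd p2) = w" using ia E(3) by (simp add: p2_def rev_upt_hd w_def)
    have p2fin: "fin_path N A p2" unfolding p2_def by (rule fin_path_seg[of N A E]) (use E(1) Esucc in auto)
    have p2g: "\<forall>e\<in>set p2. good A B e" using E(4) by (simp add: p2_def)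
    have "act_path A B 1 p2 = act_path A B 0 p2"
      using geq p2ne p2hd p2fin unfolding GB_equiv_def by simp
    also have "\<dots> = p2" by (rule act0[OF p2g])
    finally have fix1: "act_path A B 1 p2 = p2" .
    have "lval A p2 = (1 + lval A p2) mod lW A p2"
      using act_val[OF p2g, of 1] fix1 by simp
    moreover have "0 \<le> lval A p2" "lval A p2 < lW A p2" using lval_bounds[OF p2g] by auto
    moreover have "int (A (edge_r (E i0)) (edge_s (E i0))) \<le> lW A p2"
      using factor_le_lW[OF p2g, of "E i0"] ia by (simp add: p2_def)
    moreover have "int (A (edge_r (E i0)) (edge_s (E i0))) \<ge> 2" using i0 E by (simp add: a_def)
    ultimately show False
    proof -
      assume h: "lval A p2 = (1 + lval A p2) mod lW A p2" "0 \<le> lval A p2" "lval A p2 < lW A p2"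
        "int (A (edge_r (E i0)) (edge_s (E i0))) \<le> lW A p2" "int (A (edge_r (E i0)) (edge_s (E i0))) \<ge> 2"
      show False
      proof (cases "1 + lval A p2 < lW A p2")
        case True
        then have "(1 + lval A p2) mod lW A p2 = 1 + lval A p2" using h(2) by (intro mod_pos_pos_trivial) auto
        then show False using h(1) by simp
      next
        case False
        then have "1 + lval A p2 = lW A p2" using h(3) by simp
        then have "(1 + lval A p2) mod lW A p2 = 0" by simp
        then show False using h by simp
      qed
    qed
  qed
  show ?thesis
  proof (cases "\<forall>i. a i = 1")
    case True then show ?thesis by (simp add: a_def)
  next
    case False
    then obtain i0 where "a i0 \<noteq> 1" by blast
    then have i0: "a i0 \<ge> 2" using a1[of i0] by linarith
    have ex: "\<exists>i\<ge>m. a i \<ge> 2" for m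
    proof (induction m)
      case 0 then show ?case using i0 by blast
    next
      case (Suc m)
      then obtain i where i: "i \<ge> m" "a i \<ge> 2" by blast
      show ?case
      proof (cases "i \<ge> Suc m")
        case True then show ?thesis using i by blast
      next
        case False
        obtain i1 where "i1 > i" "a i1 \<ge> 2" using claim[OF i(2)] by blast
        then show ?thesis using False i(1) by (intro exI[of _ i1]) auto
      qed
    qed
    have pow: "\<exists>m. Qp a m \<ge> 2 ^ r" for r
    proof (induction r)
      case 0 show ?case by (rule exI[of _ 0]) (simp add: Qp_def)
    next
      case (Suc r)
      then obtain m where m: "Qp a m \<ge> 2 ^ r" by blast
      obtain i where i: "i \<ge> m" "a i \<ge> 2" using ex by blast
      have "Qp a m \<le> Qp a i" using Qp_mono[OF a1 i(1)] .
      then have "2 ^ Suc r \<le> 2 * Qp a i" using m by simp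
      also have "\<dots> \<le> real (a i) * Qp a i" using i(2) Qp_pos[of a i] a1 by (intro mult_right_mono) auto
      finally show ?case by (metis Qp_Suc)
    qed
    show ?thesis
    proof (rule disjI2, intro allI)
      fix b :: real
      obtain r where "b < 2 ^ r" using real_arch_pow[of 2 b] by auto
      moreover obtain m where "Qp a m \<ge> 2 ^ r" using pow by blast
      ultimately show "\<exists>m. Qp (\<lambda>i. A (u (Suc i)) (u i)) m > b" unfolding a_def[symmetric] by (intro exI[of _ m]) linarith
    qed
  qed
qed



lemma Xv_facts:
  assumes x: "x \<in> X_v N A v" and hB: "\<forall>k<0. B (v (k - 1)) (v k) = 1"
  shows "edge_in N A (x (-int i - 1))" "edge_s (x (-int i - 1)) = v (-int i - 1)"
    "edge_r (x (-int i - 1)) = v (-int (Suc i) - 1)" "good A B (x (-int i - 1))"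
proof -
  have li: "left_inf_path N A x" and sv: "\<forall>k<0. edge_s (x k) = v k" using x by (auto simp: X_v_def)
  show ei: "edge_in N A (x (-int i - 1))" using li by (simp add: left_inf_path_def)
  show "edge_s (x (-int i - 1)) = v (-int i - 1)" using sv by simp
  have "edge_s (x (-int i - 2)) = edge_r (x (-int i - 2 + 1))" using li by (simp add: left_inf_path_def)
  moreover have "edge_s (x (-int i - 2)) = v (-int i - 2)" using sv by simp
  moreover have "-int i - 2 + 1 = -int i - 1" by simp
  moreover have "-int (Suc i) - 1 = -int i - 2" by simp
  ultimately show er: "edge_r (x (-int i - 1)) = v (-int (Suc i) - 1)" by metis
  have "B (v (-int i - 1 - 1)) (v (-int i - 1)) = 1" using spec[OF hB, of "-int i - 1"] by simp
  moreover have "-int i - 1 - 1 = -int (Suc i) - 1" by simp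
  ultimately have "B (v (-int (Suc i) - 1)) (v (-int i - 1)) = 1" by metis
  then show "good A B (x (-int i - 1))"
    using ei er \<open>edge_s (x (-int i - 1)) = v (-int i - 1)\<close> by (simp add: good_def edge_in_def)
qed

lemma Cv_eq:
  "C_v A v (iota x) = frac (suminf (ff (\<lambda>i. A (v (-int (Suc i) - 1)) (v (-int i - 1))) (\<lambda>i. edge_lab (x (-int i - 1)))))"
proof -
  have "real (iota x (- int n - 1)) / real (Aprod A v (- int n - 1)) =
     ff (\<lambda>i. A (v (-int (Suc i) - 1)) (v (-int i - 1))) (\<lambda>i. edge_lab (x (-int i - 1))) n" for n
  proof -
    have h: "- int n - 1 = - int (Suc n)" by simp
    have "Aprod A v (- int n - 1) = Aprod A v (- int (Suc n))" by (simp only: h)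
    then have "real (Aprod A v (- int n - 1)) = Qp (\<lambda>i. A (v (-int (Suc i) - 1)) (v (-int i - 1))) (Suc n)"
      unfolding Aprod_eq Qp_def by simp
    then show ?thesis by (simp add: ff_def iota_def)
  qed
  then show ?thesis unfolding C_v_def by simp
qed

theorem proposition6p3:
  fixes N :: nat and A :: "nat \<Rightarrow> nat \<Rightarrow> nat" and B :: "nat \<Rightarrow> nat \<Rightarrow> int"
    and v :: "int \<Rightarrow> nat" and mu nu :: "int \<Rightarrow> edge"
  assumes "katsura_pair N A B"
    and "\<forall>i\<in>{1..N}. \<forall>j\<in>{1..N}. B i j \<in> {0, 1}"
    and "regular N A B"
    and "EC_path N A v"
    and "\<forall>k<0. B (v (k - 1)) (v k) = 1"
    and "mu \<in> X_v N A v" and "nu \<in> X_v N A v"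
  shows "ae_equiv N A B mu nu \<longleftrightarrow> C_v A v (iota mu) = C_v A v (iota nu)"
proof -
  define u where "u = (\<lambda>i::nat. v (-int i - 1))"
  define a where "a = (\<lambda>i. A (u (Suc i)) (u i))"
  define E1 where "E1 = (\<lambda>i::nat. mu (-int i - 1))"
  define E2 where "E2 = (\<lambda>i::nat. nu (-int i - 1))"
  define d1 where "d1 = (\<lambda>i. edge_lab (E1 i))"
  define d2 where "d2 = (\<lambda>i. edge_lab (E2 i))"
  have F1: "edge_in N A (E1 i)" "edge_s (E1 i) = u i" "edge_r (E1 i) = u (Suc i)" "good A B (E1 i)" for i
    using Xv_facts[OF assms(6) assms(5), of i] by (simp_all add: E1_def u_def)
  have F2: "edge_in N A (E2 i)" "edge_s (E2 i) = u i" "edge_r (E2 i) = u (Suc i)" "good A B (E2 i)" for i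
    using Xv_facts[OF assms(7) assms(5), of i] by (simp_all add: E2_def u_def)
  have dd1: "d1 i < a i" for i using F1[of i] by (simp add: good_def d1_def a_def)
  have dd2: "d2 i < a i" for i using F2[of i] by (simp add: good_def d2_def a_def)
  have a1: "a i \<ge> 1" for i using dd1[of i] by linarith
  have Cv1: "C_v A v (iota mu) = frac (suminf (ff a d1))"
    using Cv_eq[of A v mu] by (simp add: a_def d1_def u_def E1_def)
  have Cv2: "C_v A v (iota nu) = frac (suminf (ff a d2))"
    using Cv_eq[of A v nu] by (simp add: a_def d2_def u_def E2_def)
  define L1 where "L1 = (\<lambda>m. map E1 (rev [0..<m]))"
  define L2 where "L2 = (\<lambda>m. map E2 (rev [0..<m]))"
  have mu_L: "map mu [-int m..-1] = L1 m" for m by (simp add: map_upto L1_def E1_def)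
  have nu_L: "map nu [-int m..-1] = L2 m" for m by (simp add: map_upto L2_def E2_def)
  define Qi where "Qi = (\<lambda>m. int (\<Prod>i<m. a i))"
  have Qi: "real_of_int (Qi m) = Qp a m" for m by (simp add: Qi_def Qp_def)
  have W1: "lW A (L1 m) = Qi m" for m unfolding L1_def Qi_def a_def by (rule seg_lW) (use F1 in auto)
  have W2: "lW A (L2 m) = Qi m" for m unfolding L2_def Qi_def a_def by (rule seg_lW) (use F2 in auto)
  define V1 where "V1 = (\<lambda>m. lval A (L1 m))"
  define V2 where "V2 = (\<lambda>m. lval A (L2 m))"
  have V1: "real_of_int (V1 m) / Qp a m = (\<Sum>i<m. ff a d1 i)" for m
    unfolding V1_def L1_def a_def d1_def by (rule seg_lval) (use F1 a1 a_def in auto)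
  have V2: "real_of_int (V2 m) / Qp a m = (\<Sum>i<m. ff a d2 i)" for m
    unfolding V2_def L2_def a_def d2_def by (rule seg_lval) (use F2 a1 a_def in auto)
  have G1: "\<forall>e\<in>set (L1 m). good A B e" for m using F1 by (simp add: L1_def)
  have G2: "\<forall>e\<in>set (L2 m). good A B e" for m using F2 by (simp add: L2_def)
  have R12: "map edge_r (L1 m) = map edge_r (L2 m)" for m using F1 F2 by (simp add: L1_def L2_def)
  have S12: "map edge_s (L1 m) = map edge_s (L2 m)" for m using F1 F2 by (simp add: L1_def L2_def)
  show ?thesis
  proof
    assume ae: "ae_equiv N A B mu nu"
    then obtain F g where Ff: "finite F" and g: "\<forall>n<0. g n \<in> F \<and> snd (g n) = edge_r (mu n) \<and>
             act_path A B (fst (g n)) (map mu [n..-1]) = map nu [n..-1]"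
      unfolding ae_equiv_def by blast
    show "C_v A v (iota mu) = C_v A v (iota nu)"
    proof (cases "\<forall>i. a i = 1")
      case True
      then have "d1 i = 0" "d2 i = 0" for i using dd1[of i] dd2[of i] by auto
      then have "ff a d1 = (\<lambda>_. 0)" "ff a d2 = (\<lambda>_. 0)" by (auto simp: ff_def)
      then show ?thesis using Cv1 Cv2 by simp
    next
      case False
      have unb: "\<forall>b. \<exists>m. Qp a m > b"
        using reg_dich[OF assms(3), of E1 u] F1 False unfolding a_def by blast
      define K where "K = Max ((\<lambda>x. \<bar>fst x\<bar>) ` F)"
      have Kb: "\<bar>fst x\<bar> \<le> K" if "x \<in> F" for x using Ff that unfolding K_def by (intro Max_ge) auto
      have "frac (suminf (ff a d1)) = frac (suminf (ff a d2))"
      proof (rule fwd_num[OF dd1 dd2 Qi V1 V2])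
        show "\<exists>m. Qp a m > b" for b using unb by blast
        fix m :: nat assume m1: "m \<ge> 1"
        define n where "n = -int m"
        have n0: "n < 0" using m1 by (simp add: n_def)
        define k where "k = fst (g n)"
        have gn1: "g n \<in> F" "act_path A B k (map mu [n..-1]) = map nu [n..-1]" using g n0 by (auto simp: k_def)
        have gn: "g n \<in> F" "act_path A B k (L1 m) = L2 m" using gn1 unfolding n_def mu_L nu_L by auto
        have "lval A (L2 m) = (k + lval A (L1 m)) mod lW A (L1 m)"
          using act_val[OF G1, of k m] gn(2) by simp
        then have "V2 m = (k + V1 m) mod Qi m" by (simp add: V1_def V2_def W1)
        then have "V2 m = k + V1 m + (- ((k + V1 m) div Qi m)) * Qi m"
          by (metis add.commute add_diff_cancel_left' diff_conv_add_uminus minus_div_mult_eq_mod mult_minus_left)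
        moreover have "\<bar>k\<bar> \<le> K" using Kb gn(1) by (simp add: k_def)
        ultimately show "\<exists>k z. \<bar>k\<bar> \<le> K \<and> V2 m = k + V1 m + z * Qi m" by blast
      qed
      then show ?thesis using Cv1 Cv2 by simp
    qed
  next
    assume eq: "C_v A v (iota mu) = C_v A v (iota nu)"
    then have "frac (suminf (ff a d1)) = frac (suminf (ff a d2))" using Cv1 Cv2 by simp
    then obtain z where z: "\<And>m. \<bar>V2 m - V1 m - z * Qi m\<bar> \<le> 1"
      using back_num[OF dd1 dd2 Qi V1 V2] by blast
    define c where "c = (\<lambda>m. V2 m - V1 m - z * Qi m)"
    define g where "g = (\<lambda>n::int. (c (nat (-n)), edge_r (mu n)))"
    define F :: "(int \<times> nat) set" where "F = {-1, 0, 1} \<times> {1..N}"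
    show "ae_equiv N A B mu nu"
      unfolding ae_equiv_def
    proof (intro exI conjI allI impI)
      show "finite F" by (simp add: F_def)
      show "F \<subseteq> GB_carrier N" by (auto simp: F_def GB_carrier_def)
      fix n :: int assume n0: "n < 0"
      define m where "m = nat (-n)"
      have nm: "n = -int m" using n0 by (simp add: m_def)
      have "edge_r (mu n) \<in> {1..N}"
        using assms(6) n0 by (auto simp: X_v_def left_inf_path_def edge_in_def)
      moreover have "c m \<in> {-1, 0, 1}" using z[of m] by (auto simp: c_def)
      ultimately show "g n \<in> F" by (simp add: g_def F_def m_def)
      show "snd (g n) = edge_r (mu n)" by (simp add: g_def)
      have av: "map edge_r (act_path A B (c m) (L1 m)) = map edge_r (L2 m) \<and>
         map edge_s (act_path A B (c m) (L1 m)) = map edge_s (L2 m) \<and>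
         (\<forall>e\<in>set (act_path A B (c m) (L1 m)). good A B e) \<and>
         lval A (act_path A B (c m) (L1 m)) = (c m + V1 m) mod Qi m"
        using act_val[OF G1, of "c m" m] R12 S12 W1 by (simp add: V1_def)
      have "(c m + V1 m) mod Qi m = (V2 m + (- z) * Qi m) mod Qi m" by (simp add: c_def)
      also have "\<dots> = V2 m mod Qi m" by (metis mod_mult_self1)
      also have "\<dots> = V2 m" using lval_bounds[OF G2, of m] W2 by (simp add: V2_def)
      finally have "lval A (act_path A B (c m) (L1 m)) = lval A (L2 m)" using av by (simp add: V2_def)
      then have "act_path A B (c m) (L1 m) = L2 m"
        using lval_inj[of "act_path A B (c m) (L1 m)" A B "L2 m"] av G2 by blast
      show "act_path A B (fst (g n)) (map mu [n..-1]) = map nu [n..-1]"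
      proof -
        have "fst (g n) = c m" by (simp add: g_def m_def)
        moreover have "map mu [n..-1] = L1 m" "map nu [n..-1] = L2 m" unfolding nm mu_L nu_L by simp_all
        ultimately show ?thesis using \<open>act_path A B (c m) (L1 m) = L2 m\<close> by simp
      qed
    qed
  qed
qed


end
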